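(* Let $\delta>0$, let $f \in C((0,\infty);(0,\infty))$ be asymptotically increasing with $\lim_{x\to\infty} f(x)/x = \infty$, let $w \in C([0,\infty);[0,\infty))$ with $w(0)>0$, and let $\psi \in C([-\delta,0];(0,\infty))$. If \[ \int_\eta^\infty \frac{du}{\sqrt{\int_0^u f(s)\,ds}} < \infty \quad \text{for some } \eta>0, \] then solutions of \[ y'(t) = \int_{t-\delta}^t w(t-s) f(y(s))\,ds, \quad t \ge 0; \qquad y(t)=\psi(t), \quad t\in[-\delta,0], \] blow up in finite time.
   Context: "$f$ is asymptotically increasing" means that there is a continuous increasing function $\phi:(0,\infty)\to(0,\infty)$ with $f(x)/\phi(x)\to 1$ as $x\to\infty$. A solution blows up in finite time if there is $T\in(0,\infty)$ with $y$ continuous on $[-\delta,T)$ and $\lim_{t\to T^-}|y(t)|=\infty$. *)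

theory Defs
  imports "HOL-Analysis.Analysis"
begin

definition asymp_increasing :: "(real \<Rightarrow> real) \<Rightarrow> bool" where
  "asymp_increasing f \<longleftrightarrow>
     (\<exists>\<phi>::real \<Rightarrow> real. continuous_on {0<..} \<phi> \<and> strict_mono_on {0<..} \<phi> \<and>
        (\<forall>x>0. \<phi> x > 0) \<and> ((\<lambda>x. f x / \<phi> x) \<longlongrightarrow> 1) at_top)"

text \<open>y is a solution of y'(t) = int_{t-delta}^t w(t-s) f(y(s)) ds (t >= 0),
  y = psi on [-delta,0], on the interval [-delta, T) (T may be infinity).
  Since f is only defined on (0,inf), a solution must take values in (0,inf).
  At t = 0 the derivative is one-sided (within [0,T)).\<close>
definition is_solution ::
  "real \<Rightarrow> (real \<Rightarrow> real) \<Rightarrow> (real \<Rightarrow> real) \<Rightarrow> (real \<Rightarrow> real) \<Rightarrow> ereal \<Rightarrow> (real \<Rightarrow> real) \<Rightarrow> bool"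
  where
  "is_solution \<delta> w f \<psi> T y \<longleftrightarrow>
     0 < T \<and>
     continuous_on {t. -\<delta> \<le> t \<and> ereal t < T} y \<and>
     (\<forall>t\<in>{-\<delta>..0}. y t = \<psi> t) \<and>
     (\<forall>t. -\<delta> \<le> t \<and> ereal t < T \<longrightarrow> 0 < y t) \<and>
     (\<forall>t. 0 \<le> t \<and> ereal t < T \<longrightarrow>
        (y has_real_derivative integral {t-\<delta>..t} (\<lambda>s. w (t - s) * f (y s)))
          (at t within {t. 0 \<le> t \<and> ereal t < T}))"

definition is_maximal_solution ::
  "real \<Rightarrow> (real \<Rightarrow> real) \<Rightarrow> (real \<Rightarrow> real) \<Rightarrow> (real \<Rightarrow> real) \<Rightarrow> ereal \<Rightarrow> (real \<Rightarrow> real) \<Rightarrow> bool"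
  where
  "is_maximal_solution \<delta> w f \<psi> T y \<longleftrightarrow>
     is_solution \<delta> w f \<psi> T y \<and>
     \<not> (\<exists>T' z. T < T' \<and> is_solution \<delta> w f \<psi> T' z \<and>
              (\<forall>t. -\<delta> \<le> t \<and> ereal t < T \<longrightarrow> z t = y t))"

end

theory Submission
  imports Defs "HOL-Complex_Analysis.Great_Picard"
begin

lemma ereal_le_lessT: "(s::real) \<le> t \<Longrightarrow> ereal t < T \<Longrightarrow> ereal s < T"
  by (metis ereal_less_eq(3) le_less_trans)

lemma ereal_between: "ereal t < T \<Longrightarrow> \<exists>b. t < b \<and> ereal b \<le> T"
proof (cases T)
  case (real r)
  then show "ereal t < T \<Longrightarrow> ?thesis" by auto
next
  case PInf
  then show "ereal t < T \<Longrightarrow> ?thesis" by (intro exI[of _ "t+1"]) auto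
qed auto

locale sol_ctx =
  fixes \<delta> :: real and w f \<psi> y :: "real \<Rightarrow> real" and T :: ereal
  assumes dpos: "\<delta> > 0"
    and fcont: "continuous_on {0<..} f" and fpos: "\<And>x. x > 0 \<Longrightarrow> f x > 0"
    and wcont: "continuous_on {0..} w" and wnn: "\<And>x. x \<ge> 0 \<Longrightarrow> w x \<ge> 0"
    and sol: "is_solution \<delta> w f \<psi> T y"
begin

lemma Tpos: "0 < T" using sol unfolding is_solution_def by auto

lemma ycont: "continuous_on {t. -\<delta> \<le> t \<and> ereal t < T} y"
  using sol unfolding is_solution_def by auto

lemma ypsi: "t \<in> {-\<delta>..0} \<Longrightarrow> y t = \<psi> t"
  using sol unfolding is_solution_def by auto

lemma ypos: "-\<delta> \<le> t \<Longrightarrow> ereal t < T \<Longrightarrow> 0 < y t"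
  using sol unfolding is_solution_def by auto

lemma yderiv: "0 \<le> t \<Longrightarrow> ereal t < T \<Longrightarrow>
   (y has_real_derivative integral {t-\<delta>..t} (\<lambda>s. w (t - s) * f (y s)))
          (at t within {t. 0 \<le> t \<and> ereal t < T})"
  using sol unfolding is_solution_def by auto

lemma integrand_cont:
  assumes "0 \<le> t" "ereal t < T" "t - \<delta> \<le> a" "b \<le> t"
  shows "continuous_on {a..b} (\<lambda>s. w (t - s) * f (y s))"
proof (intro continuous_intros)
  show "continuous_on {a..b} (\<lambda>s. w (t - s))"
    by (rule continuous_on_compose2[OF wcont]) (use assms in \<open>auto intro!: continuous_intros\<close>)
  have sub: "{a..b} \<subseteq> {t. -\<delta> \<le> t \<and> ereal t < T}"
  proof
    fix s assume "s \<in> {a..b}"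
    then have "-\<delta> \<le> s" "s \<le> t" using assms dpos by auto
    then show "s \<in> {t. -\<delta> \<le> t \<and> ereal t < T}"
      using assms(2) ereal_le_lessT by auto
  qed
  show "continuous_on {a..b} (\<lambda>s. f (y s))"
  proof (rule continuous_on_compose2[OF fcont continuous_on_subset[OF ycont sub]])
    show "y ` {a..b} \<subseteq> {0<..}"
    proof
      fix v assume "v \<in> y ` {a..b}"
      then obtain s where "s \<in> {a..b}" "v = y s" by blast
      with sub have "-\<delta> \<le> s" "ereal s < T" by auto
      then show "v \<in> {0<..}" using ypos \<open>v = y s\<close> by auto
    qed
  qed
qed

lemma integrand_nonneg:
  assumes "0 \<le> t" "ereal t < T" "t - \<delta> \<le> s" "s \<le> t"
  shows "0 \<le> w (t - s) * f (y s)"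
proof -
  have "-\<delta> \<le> s" using assms dpos by auto
  moreover have "ereal s < T" using assms ereal_le_lessT by auto
  ultimately have "0 < y s" by (rule ypos)
  then show ?thesis using wnn[of "t-s"] fpos[of "y s"] assms by auto
qed

lemma R_nonneg:
  assumes "0 \<le> t" "ereal t < T"
  shows "0 \<le> integral {t-\<delta>..t} (\<lambda>s. w (t - s) * f (y s))"
proof (rule integral_nonneg)
  show "(\<lambda>s. w (t - s) * f (y s)) integrable_on {t - \<delta>..t}"
    by (rule integrable_continuous_interval, rule integrand_cont) (use assms in auto)
  fix s assume "s \<in> {t - \<delta>..t}"
  then show "0 \<le> w (t - s) * f (y s)" using integrand_nonneg[OF assms] by auto
qed

lemma lt_le_T: "(t::real) < b \<Longrightarrow> ereal b \<le> T \<Longrightarrow> ereal t < T"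
  using less_le_trans[of "ereal t" "ereal b" T] by simp

lemma yderiv_at:
  assumes "0 < t" "t < b" "ereal b \<le> T"
  shows "(y has_real_derivative integral {t-\<delta>..t} (\<lambda>s. w (t - s) * f (y s))) (at t)"
proof -
  have tT: "ereal t < T" using assms lt_le_T by blast
  have sub: "{0<..<b} \<subseteq> {t. 0 \<le> t \<and> ereal t < T}"
  proof
    fix u assume "u \<in> {0<..<b}"
    then show "u \<in> {t. 0 \<le> t \<and> ereal t < T}" using lt_le_T[of u b] assms(3) by auto
  qed
  have "at t within {t. 0 \<le> t \<and> ereal t < T} = at t"
    by (rule at_within_open_subset[OF _ _ sub]) (use assms in auto)
  then show ?thesis using yderiv[of t] assms(1) tT by simp
qed

lemma y_mono:
  assumes "0 \<le> s" "s \<le> t" "ereal t < T"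
  shows "y s \<le> y t"
proof (rule DERIV_nonneg_imp_increasing_open[OF assms(2)])
  obtain b where b: "t < b" "ereal b \<le> T"
    using ereal_between[OF assms(3)] by auto
  fix x assume x: "s < x" "x < t"
  have xb: "x < b" using x b by simp
  have xT: "ereal x < T" using xb b lt_le_T by blast
  have "0 < x" using x assms by simp
  then show "\<exists>d. (y has_real_derivative d) (at x) \<and> 0 \<le> d"
    using yderiv_at[OF _ xb b(2)] R_nonneg[OF _ xT] by (intro exI conjI) auto
next
  have "{s..t} \<subseteq> {t. -\<delta> \<le> t \<and> ereal t < T}"
  proof
    fix u assume "u \<in> {s..t}"
    then show "u \<in> {t. -\<delta> \<le> t \<and> ereal t < T}"
      using assms dpos ereal_le_lessT[of u t T] by auto
  qed
  then show "continuous_on {s..t} y" using continuous_on_subset[OF ycont] by auto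
qed

end

context sol_ctx
begin

lemma R_lower:
  assumes "0 \<le> s" "s \<le> t" "ereal t < T" "t - s \<le> dd" "dd \<le> \<delta>"
    and "\<forall>r\<in>{0..dd}. c \<le> w r" "0 \<le> c" "0 \<le> \<beta>" "\<forall>\<sigma>\<in>{s..t}. \<beta> \<le> f (y \<sigma>)"
  shows "c * \<beta> * (t - s) \<le> integral {t-\<delta>..t} (\<lambda>\<sigma>. w (t - \<sigma>) * f (y \<sigma>))"
proof -
  let ?g = "\<lambda>\<sigma>. w (t - \<sigma>) * f (y \<sigma>)"
  have t0: "0 \<le> t" using assms by simp
  have sd: "t - \<delta> \<le> s" using assms by simp
  have int_all: "?g integrable_on {t-\<delta>..t}"
    by (rule integrable_continuous_interval, rule integrand_cont) (use assms in auto)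
  have int1: "?g integrable_on {t-\<delta>..s}"
    by (rule integrable_continuous_interval, rule integrand_cont) (use assms in auto)
  have int2: "?g integrable_on {s..t}"
    by (rule integrable_continuous_interval, rule integrand_cont) (use assms sd in auto)
  have comb: "integral {t-\<delta>..s} ?g + integral {s..t} ?g = integral {t-\<delta>..t} ?g"
    by (rule Henstock_Kurzweil_Integration.integral_combine[OF sd assms(2) int_all])
  have nn: "0 \<le> integral {t-\<delta>..s} ?g"
  proof (rule integral_nonneg[OF int1])
    fix x assume "x \<in> {t - \<delta>..s}"
    then show "0 \<le> ?g x" using integrand_nonneg[OF t0 assms(3)] assms by auto
  qed
  have "integral {s..t} (\<lambda>_. c * \<beta>) \<le> integral {s..t} ?g"
  proof (rule integral_le[OF _ int2])
    show "(\<lambda>_. c * \<beta>) integrable_on {s..t}"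
      by (rule integrable_continuous_interval) (rule continuous_on_const)
    fix x assume x: "x \<in> {s..t}"
    then have "c \<le> w (t - x)" using assms by auto
    moreover have "\<beta> \<le> f (y x)" using assms x by auto
    ultimately show "c * \<beta> \<le> ?g x"
      using assms by (intro mult_mono) auto
  qed
  also have "integral {s..t} (\<lambda>_. c * \<beta>) = c * \<beta> * (t - s)" using assms by simp
  finally show ?thesis using comb nn by linarith
qed

lemma grow:
  assumes "0 \<le> s" "ereal (s + \<tau>) < T" "0 \<le> \<tau>" "\<tau> \<le> dd" "dd \<le> \<delta>"
    and "\<forall>r\<in>{0..dd}. c \<le> w r" "0 \<le> c" "0 \<le> \<beta>" "\<forall>\<sigma>\<in>{s..s+\<tau>}. \<beta> \<le> f (y \<sigma>)"
  shows "y s + c * \<beta> * \<tau>\<^sup>2 / 2 \<le> y (s + \<tau>)"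
proof -
  let ?H = "\<lambda>t. y t - c * \<beta> * (t - s)\<^sup>2 / 2"
  have "?H s \<le> ?H (s + \<tau>)"
  proof (rule DERIV_nonneg_imp_increasing_open[of s "s+\<tau>" ?H])
    show "s \<le> s + \<tau>" using assms by simp
    fix x assume x: "s < x" "x < s + \<tau>"
    have xT: "ereal x < T" using x assms(2) by (meson ereal_le_lessT less_imp_le)
    have d1: "(y has_real_derivative integral {x-\<delta>..x} (\<lambda>\<sigma>. w (x - \<sigma>) * f (y \<sigma>))) (at x)"
      by (rule yderiv_at[of x "s+\<tau>"]) (use x assms in auto)
    have d2: "((\<lambda>t. c * \<beta> * (t - s)\<^sup>2 / 2) has_real_derivative c * \<beta> * (x - s)) (at x)"
      by (auto intro!: derivative_eq_intros simp: power2_eq_square field_simps)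
    have low: "c * \<beta> * (x - s) \<le> integral {x-\<delta>..x} (\<lambda>\<sigma>. w (x - \<sigma>) * f (y \<sigma>))"
      by (rule R_lower[where dd=dd]) (use x assms xT in auto)
    show "\<exists>d. (?H has_real_derivative d) (at x) \<and> 0 \<le> d"
      using DERIV_diff[OF d1 d2] low by (intro exI conjI) auto
  next
    have sub: "{s..s+\<tau>} \<subseteq> {t. -\<delta> \<le> t \<and> ereal t < T}"
    proof
      fix u assume "u \<in> {s..s+\<tau>}"
      then show "u \<in> {t. -\<delta> \<le> t \<and> ereal t < T}"
        using assms dpos ereal_le_lessT[of u "s+\<tau>" T] by auto
    qed
    show "continuous_on {s..s + \<tau>} ?H"
      by (intro continuous_intros continuous_on_subset[OF ycont sub]) auto
  qed
  then show ?thesis by simp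
qed

end

lemma Fpos:
  fixes f :: "real \<Rightarrow> real"
  assumes fc: "continuous_on {0<..} f" and fp: "\<And>x. x > 0 \<Longrightarrow> f x > 0"
    and u: "u > 0" and fi: "f integrable_on {0..u}"
  shows "integral {0..u} f > 0"
proof -
  let ?g = "\<lambda>x. if x = 0 then 0 else f x"
  have i1: "f integrable_on {0..u/2}" by (rule integrable_on_subinterval[OF fi]) (use u in auto)
  have i2: "f integrable_on {u/2..u}" by (rule integrable_on_subinterval[OF fi]) (use u in auto)
  have comb: "integral {0..u/2} f + integral {u/2..u} f = integral {0..u} f"
    by (rule Henstock_Kurzweil_Integration.integral_combine[OF _ _ fi]) (use u in auto)
  have eq: "integral {0..u/2} f = integral {0..u/2} ?g"
    by (rule integral_spike[of "{0}"]) auto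
  have gi: "?g integrable_on {0..u/2}"
    by (rule integrable_spike[OF i1, of "{0}"]) auto
  have n1: "0 \<le> integral {0..u/2} f"
    unfolding eq by (rule integral_nonneg[OF gi]) (simp add: fp less_imp_le)
  have "continuous_on {u/2..u} f" by (rule continuous_on_subset[OF fc]) (use u in auto)
  then obtain x0 where x0: "x0 \<in> {u/2..u}" "\<And>x. x \<in> {u/2..u} \<Longrightarrow> f x0 \<le> f x"
    using continuous_attains_inf[of "{u/2..u}" f] u by auto
  have "integral {u/2..u} (\<lambda>_. f x0) \<le> integral {u/2..u} f"
    by (rule integral_le[OF _ i2]) (auto intro: x0(2))
  moreover have "integral {u/2..u} (\<lambda>_. f x0) = (u/2) * f x0" using u by simp
  moreover have "0 < (u/2) * f x0" using x0(1) u fp[of x0] by auto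
  ultimately show ?thesis using comb n1 by linarith
qed

lemma F_mono:
  fixes f :: "real \<Rightarrow> real"
  assumes fp: "\<And>x. x > 0 \<Longrightarrow> f x > 0" and fi: "f integrable_on {0..v}"
    and "0 < u" "u \<le> v"
  shows "integral {0..u} f \<le> integral {0..v} f"
proof -
  have comb: "integral {0..u} f + integral {u..v} f = integral {0..v} f"
    by (rule Henstock_Kurzweil_Integration.integral_combine[OF _ _ fi]) (use assms in auto)
  have "0 \<le> integral {u..v} f"
    by (rule integral_nonneg[OF integrable_on_subinterval[OF fi]])
       (use assms in \<open>auto intro: less_imp_le\<close>)
  then show ?thesis using comb by linarith
qed

context sol_ctx
begin

lemma w_pos_near0:
  assumes w0: "w 0 > 0"
  obtains dd c where "0 < dd" "dd \<le> \<delta>" "0 < c" "\<forall>r\<in>{0..dd}. c \<le> w r"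
proof -
  have "continuous (at 0 within {0..}) w"
    using wcont by (simp add: continuous_on_eq_continuous_within)
  then obtain d where d: "d > 0" "\<forall>x'\<in>{0..}. dist x' 0 < d \<longrightarrow> dist (w x') (w 0) < w 0 / 2"
    unfolding continuous_within_eps_delta using w0 by (meson half_gt_zero)
  show ?thesis
  proof (rule that[of "min \<delta> (d/2)" "w 0 / 2"])
    show "\<forall>r\<in>{0..min \<delta> (d / 2)}. w 0 / 2 \<le> w r"
    proof
      fix r assume r: "r \<in> {0..min \<delta> (d / 2)}"
      then have "dist (w r) (w 0) < w 0 / 2" using d by (auto simp: dist_real_def)
      then show "w 0 / 2 \<le> w r" by (auto simp: dist_real_def abs_if split: if_splits)
    qed
  qed (use dpos d w0 in auto)
qed

lemma unbounded_global:
  assumes TI: "T = PInfty" and w0: "w 0 > 0"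
  shows "\<exists>t\<ge>0. B < y t"
proof (rule ccontr)
  assume "\<not> (\<exists>t\<ge>0. B < y t)"
  then have yB: "\<And>t. t \<ge> 0 \<Longrightarrow> y t \<le> B" by force
  obtain dd c where dc: "0 < dd" "dd \<le> \<delta>" "0 < c" "\<forall>r\<in>{0..dd}. c \<le> w r"
    using w_pos_near0[OF w0] by blast
  have y0: "0 < y 0" using ypos[of 0] dpos TI by auto
  have "continuous_on {y 0..B} f" by (rule continuous_on_subset[OF fcont]) (use y0 in auto)
  moreover have "y 0 \<le> B" using yB by auto
  ultimately obtain x0 where x0: "x0 \<in> {y 0..B}" "\<And>x. x \<in> {y 0..B} \<Longrightarrow> f x0 \<le> f x"
    using continuous_attains_inf[of "{y 0..B}" f] by auto
  define \<beta> where "\<beta> = f x0"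
  have bpos: "0 < \<beta>" unfolding \<beta>_def using x0(1) y0 fpos by auto
  define k where "k = c * \<beta> * dd\<^sup>2 / 2"
  have kpos: "0 < k" unfolding k_def using dc bpos by auto
  have step: "y 0 + real n * k \<le> y (real n * dd)" for n
  proof (induction n)
    case 0 then show ?case by simp
  next
    case (Suc n)
    have "y (real n * dd) + c * \<beta> * dd\<^sup>2 / 2 \<le> y (real n * dd + dd)"
    proof (rule grow[where dd=dd])
      show "\<forall>\<sigma>\<in>{real n * dd..real n * dd + dd}. \<beta> \<le> f (y \<sigma>)"
      proof
        fix \<sigma> assume s: "\<sigma> \<in> {real n * dd..real n * dd + dd}"
        have "0 \<le> real n * dd" using dc by simp
        then have "0 \<le> \<sigma>" using s by (meson atLeastAtMost_iff order_trans)
        then have "y 0 \<le> y \<sigma>" "y \<sigma> \<le> B" using y_mono[of 0 \<sigma>] yB TI by auto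
        then show "\<beta> \<le> f (y \<sigma>)" unfolding \<beta>_def using x0(2) by auto
      qed
    qed (use dc bpos TI in auto)
    moreover have "real (Suc n) * dd = real n * dd + dd" by (simp add: algebra_simps)
    moreover have "real (Suc n) * k = real n * k + c*\<beta>*dd\<^sup>2/2" unfolding k_def by (simp add: algebra_simps)
    ultimately show ?case using Suc by (simp only:)
  qed
  obtain n where "B - y 0 < real n * k" using ex_less_of_nat_mult[OF kpos] by blast
  then have "B < y (real n * dd)" using step[of n] by linarith
  moreover have "y (real n * dd) \<le> B" using yB dc by auto
  ultimately show False by simp
qed

end

context sol_ctx
begin

lemma partA:
  assumes TI: "T = PInfty" and w0: "w 0 > 0" and asy: "asymp_increasing f"
    and sup: "filterlim (\<lambda>x. f x / x) at_top at_top"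
    and eta: "\<eta> > 0" and fint: "\<forall>u\<ge>\<eta>. f integrable_on {0..u}"
    and hint: "(\<lambda>u. 1 / sqrt (integral {0..u} f)) integrable_on {\<eta>..}"
  shows False
proof -
  obtain dd c where dc: "0 < dd" "dd \<le> \<delta>" "0 < c" "\<forall>r\<in>{0..dd}. c \<le> w r"
    using w_pos_near0[OF w0] by blast
  define F where "F u = integral {0..u} f" for u
  define h where "h u = 1 / sqrt (F u)" for u
  have hint': "h integrable_on {\<eta>..}" using hint unfolding h_def F_def by simp
  from asy obtain \<phi> where \<phi>: "continuous_on {0<..} \<phi>" "strict_mono_on {0<..} \<phi>"
      "\<forall>x>0. \<phi> x > 0" "((\<lambda>x. f x / \<phi> x) \<longlongrightarrow> 1) at_top"
    unfolding asymp_increasing_def by blast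
  have ev1: "eventually (\<lambda>x. 1/2 < f x / \<phi> x) at_top"
    using order_tendstoD(1)[OF \<phi>(4), of "1/2"] by simp
  have ev2: "eventually (\<lambda>x. f x / \<phi> x < 2) at_top"
    using order_tendstoD(2)[OF \<phi>(4), of 2] by simp
  obtain N where N: "\<forall>x\<ge>N. 1/2 < f x / \<phi> x \<and> f x / \<phi> x < 2"
    using eventually_conj[OF ev1 ev2] unfolding eventually_at_top_linorder by blast
  define M1 where "M1 = max N 1"
  have phib: "\<phi> x / 2 \<le> f x \<and> f x \<le> 2 * \<phi> x" if x: "x \<ge> M1" for x
  proof -
    have "x > 0" "x \<ge> N" using x by (auto simp: M1_def)
    then have p: "\<phi> x > 0" and q: "1/2 < f x / \<phi> x" "f x / \<phi> x < 2" using \<phi>(3) N by auto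
    from q p show ?thesis by (simp add: field_simps)
  qed
  have flow: "f M / 4 \<le> f x" if a: "M1 \<le> M" "M \<le> x" for M x
  proof -
    have "M > 0" using a by (auto simp: M1_def)
    have "\<phi> M \<le> \<phi> x" by (rule strict_mono_on_leD[OF \<phi>(2)]) (use a \<open>M>0\<close> in auto)
    then show ?thesis using phib[of M] phib[of x] a by auto
  qed
  have fup: "f x \<le> 4 * f M" if a: "M1 \<le> x" "x \<le> M" for M x
  proof -
    have "x > 0" using a by (auto simp: M1_def)
    have "\<phi> x \<le> \<phi> M" by (rule strict_mono_on_leD[OF \<phi>(2)]) (use a \<open>x>0\<close> in auto)
    then show ?thesis using phib[of M] phib[of x] a by auto
  qed
  define A where "A = max \<eta> M1"
  have A: "A \<ge> \<eta>" "A \<ge> M1" "A > 0" using eta by (auto simp: A_def M1_def)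
  have FA_le: "F M \<le> F A + 4 * M * f M" if M: "M \<ge> A" for M
  proof -
    have fiM: "f integrable_on {0..M}" using fint M A by auto
    have comb: "F A + integral {A..M} f = F M" unfolding F_def
      by (rule Henstock_Kurzweil_Integration.integral_combine[OF _ M fiM]) (use A in auto)
    have "integral {A..M} f \<le> integral {A..M} (\<lambda>_. 4 * f M)"
    proof (rule integral_le[OF integrable_on_subinterval[OF fiM]])
      show "{A..M} \<subseteq> {0..M}" using A by auto
      show "(\<lambda>_. 4 * f M) integrable_on {A..M}"
        by (rule integrable_continuous_interval) (rule continuous_on_const)
      fix x assume "x \<in> {A..M}"
      then show "f x \<le> 4 * f M" using fup[of x M] A by auto
    qed
    also have "\<dots> = (M - A) * (4 * f M)" using M by simp
    also have "\<dots> \<le> 4 * M * f M"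
    proof -
      have "0 < f M" using fpos[of M] M A by auto
      then show ?thesis using A by (simp add: algebra_simps)
    qed
    finally show ?thesis using comb by linarith
  qed
  have ev3: "eventually (\<lambda>M. max (\<bar>F A\<bar> + 1) (8 / (c * dd\<^sup>2)) \<le> f M / M) at_top"
    using sup unfolding filterlim_at_top by blast
  obtain N2 where N2: "\<forall>M\<ge>N2. max (\<bar>F A\<bar> + 1) (8 / (c * dd\<^sup>2)) \<le> f M / M"
    using ev3 unfolding eventually_at_top_linorder by blast
  define M0 where "M0 = max (max (2*A) 1) N2"
  have M0: "M0 \<ge> 2*A" "M0 \<ge> 1" "M0 \<ge> N2" "M0 > 0" by (auto simp: M0_def)
  have bigM: "F M \<le> 5 * M * f M \<and> 8 * M / (c * f M) \<le> dd\<^sup>2 \<and> 0 < f M \<and> 0 < F M \<and> M \<ge> A"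
    if M: "M \<ge> M0" for M
  proof -
    have MA: "M \<ge> A" "M \<ge> 1" "M > 0" using M M0 A by auto
    have fM: "f M > 0" using fpos MA by auto
    have r: "\<bar>F A\<bar> + 1 \<le> f M / M" "8/(c*dd\<^sup>2) \<le> f M / M" using N2 M M0 by auto
    have "1/M \<le> 1" using MA by simp
    then have "f M * (1/M) \<le> f M * 1" using fM by (intro mult_left_mono) auto
    then have "f M / M \<le> f M" by simp
    also have "f M \<le> M * f M" using MA fM mult_right_mono[of 1 M "f M"] by simp
    finally have "F A \<le> M * f M" using r(1) by linarith
    then have F5: "F M \<le> 5 * M * f M" using FA_le[OF MA(1)] by linarith
    have "8 / (c * dd\<^sup>2) * M \<le> f M" using r(2) MA by (simp add: field_simps)
    then have "8 * M \<le> f M * (c * dd\<^sup>2)" using dc by (simp add: field_simps)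
    then have d2: "8 * M / (c * f M) \<le> dd\<^sup>2" using dc fM by (simp add: field_simps)
    have FMp: "0 < F M" unfolding F_def
      by (rule Fpos[OF fcont fpos]) (use MA fint A in auto)
    show ?thesis using F5 d2 fM FMp MA by auto
  qed
  define C where "C = 2 * sqrt (40 / c)"
  have Cnn: "0 \<le> C" unfolding C_def using dc by simp
  define \<tau> where "\<tau> M = sqrt (8 * M / (c * f M))" for M
  have hi: "h integrable_on {a'..b'}" if "a' \<ge> \<eta>" for a' b'
    by (rule integrable_on_subinterval[OF hint']) (use that in auto)
  have hnn: "0 \<le> h u" if "u \<ge> \<eta>" for u
  proof -
    have "0 < F u" unfolding F_def by (rule Fpos[OF fcont fpos]) (use that eta fint in auto)
    then show ?thesis unfolding h_def by simp
  qed
  have key: "\<tau> M \<le> C * integral {M/2..M} h" if M: "M \<ge> M0" for M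
  proof -
    from bigM[OF M] have b: "F M \<le> 5 * M * f M" "8 * M / (c * f M) \<le> dd\<^sup>2" "0 < f M" "0 < F M" "M \<ge> A"
      by auto
    have Mh: "M/2 \<ge> A" using M M0 by auto
    have Mpos: "M > 0" using Mh A by auto
    have low: "M/2 * (1 / sqrt (F M)) \<le> integral {M/2..M} h"
    proof -
      have "integral {M/2..M} (\<lambda>_. 1 / sqrt (F M)) \<le> integral {M/2..M} h"
      proof (rule integral_le)
        show "(\<lambda>_. 1/sqrt(F M)) integrable_on {M/2..M}"
          by (rule integrable_continuous_interval) (rule continuous_on_const)
        show "h integrable_on {M/2..M}" by (rule hi) (use Mh A in auto)
        fix u assume u: "u \<in> {M/2..M}"
        then have u': "u \<ge> A" "u > 0" "u \<le> M" using Mh A by auto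
        have Fu: "0 < F u" unfolding F_def by (rule Fpos[OF fcont fpos]) (use u' fint A in auto)
        have "F u \<le> F M" unfolding F_def
          by (rule F_mono[OF fpos]) (use fint u' A b(5) in auto)
        then have "sqrt (F u) \<le> sqrt (F M)" by simp
        then show "1/sqrt(F M) \<le> h u" unfolding h_def
          by (rule divide_left_mono) (use Fu b(4) in auto)
      qed
      moreover have "integral {M/2..M} (\<lambda>_. 1 / sqrt (F M)) = M/2 * (1 / sqrt (F M))"
        using Mpos by simp
      ultimately show ?thesis by simp
    qed
    have "\<tau> M \<le> sqrt (40 / c) * M / sqrt (F M)"
    proof -
      have "8 * M * F M \<le> 8 * M * (5 * M * f M)"
        using b(1) Mpos by (intro mult_left_mono) auto
      then have "8 * M * F M \<le> 40 * M\<^sup>2 * f M" by (simp add: power2_eq_square algebra_simps)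
      then have "8 * M / (c * f M) \<le> (40 / c) * M\<^sup>2 / F M"
        using b(3,4) dc by (simp add: field_simps)
      then have "sqrt (8 * M / (c * f M)) \<le> sqrt ((40 / c) * M\<^sup>2 / F M)" by (rule real_sqrt_le_mono)
      also have "\<dots> = sqrt (40/c) * M / sqrt (F M)"
        using Mpos by (simp add: real_sqrt_mult real_sqrt_divide)
      finally show ?thesis unfolding \<tau>_def .
    qed
    also have "\<dots> = C * (M/2 * (1 / sqrt (F M)))" unfolding C_def by simp
    also have "\<dots> \<le> C * integral {M/2..M} h" using low Cnn by (intro mult_left_mono)
    finally show ?thesis .
  qed
  obtain s0 where s0: "s0 \<ge> 0" "M0 < y s0" using unbounded_global[OF TI w0] by blast
  have iter: "\<exists>s\<ge>0. s \<le> s0 + C * integral {M0/2 .. 2^n * M0 / 2} h \<and> 2^n * M0 \<le> y s" for n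
  proof (induction n)
    case 0 show ?case using s0 by (intro exI[of _ s0]) auto
  next
    case (Suc n)
    then obtain s where s: "s \<ge> 0" "s \<le> s0 + C * integral {M0/2..2^n*M0/2} h" "2^n*M0 \<le> y s"
      by blast
    define M where "M = 2^n * M0"
    have "1 \<le> (2::real)^n" by simp
    then have MM0: "M \<ge> M0" unfolding M_def using M0 mult_right_mono[of 1 "2^n" M0] by simp
    from bigM[OF MM0] have b: "F M \<le> 5 * M * f M" "8 * M / (c * f M) \<le> dd\<^sup>2" "0 < f M" "0 < F M" "M \<ge> A"
      by auto
    have Mpos: "M > 0" using MM0 M0 by simp
    have arg: "0 \<le> 8 * M / (c * f M)" using Mpos b(3) dc by (intro divide_nonneg_pos) auto
    have tpos: "0 \<le> \<tau> M" unfolding \<tau>_def using arg by simp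
    have tdd: "\<tau> M \<le> dd"
    proof -
      have "\<tau> M \<le> sqrt (dd\<^sup>2)" unfolding \<tau>_def by (rule real_sqrt_le_mono[OF b(2)])
      then show ?thesis using dc by simp
    qed
    have tsq: "c * (f M / 4) * (\<tau> M)\<^sup>2 / 2 = M"
    proof -
      have "(\<tau> M)\<^sup>2 = 8 * M / (c * f M)" unfolding \<tau>_def using arg by simp
      then show ?thesis using dc b(3) by (simp add: field_simps)
    qed
    have g: "y s + c * (f M / 4) * (\<tau> M)\<^sup>2 / 2 \<le> y (s + \<tau> M)"
    proof (rule grow[where dd=dd])
      show "\<forall>\<sigma>\<in>{s..s + \<tau> M}. f M / 4 \<le> f (y \<sigma>)"
      proof
        fix \<sigma> assume sg: "\<sigma> \<in> {s..s + \<tau> M}"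
        then have "y s \<le> y \<sigma>" using y_mono[of s \<sigma>] s(1) TI by auto
        then have "M \<le> y \<sigma>" using s(3) unfolding M_def by simp
        then show "f M / 4 \<le> f (y \<sigma>)" using flow[of M "y \<sigma>"] b(5) A by auto
      qed
    qed (use s tpos tdd dc b TI in auto)
    then have y2: "2 * M \<le> y (s + \<tau> M)" using tsq s(3) unfolding M_def by simp
    have half: "2^n*M0/2 = M/2" unfolding M_def by simp
    have comb: "integral {M0/2..M/2} h + integral {M/2..M} h = integral {M0/2..M} h"
      by (rule Henstock_Kurzweil_Integration.integral_combine) (use MM0 Mpos M0 A in \<open>auto intro!: hi\<close>)
    have "s + \<tau> M \<le> s0 + C * integral {M0/2..M/2} h + C * integral {M/2..M} h"
      using s(2) key[OF MM0] half by simp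
    also have "\<dots> = s0 + C * integral {M0/2..M} h" using comb[symmetric] by (simp add: distrib_left)
    finally have "s + \<tau> M \<le> s0 + C * integral {M0/2..2^(Suc n)*M0/2} h"
      unfolding M_def by simp
    moreover have "2^(Suc n) * M0 \<le> y (s + \<tau> M)" using y2 unfolding M_def by simp
    ultimately show ?case using s(1) tpos by (intro exI[of _ "s + \<tau> M"]) auto
  qed
  define I where "I = integral {\<eta>..} h"
  have intle: "integral {M0/2..X} h \<le> I" if "X \<ge> M0/2" for X
    unfolding I_def
  proof (rule integral_subset_le)
    show "{M0/2..X} \<subseteq> {\<eta>..}" using M0 A by auto
    show "h integrable_on {M0/2..X}" by (rule hi) (use M0 A in auto)
    show "h integrable_on {\<eta>..}" by (rule hint')
    show "\<forall>x\<in>{\<eta>..}. 0 \<le> h x" using hnn by auto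
  qed
  define S where "S = s0 + C * I"
  have sS: "\<exists>s\<in>{0..S}. 2^n * M0 \<le> y s" for n
  proof -
    obtain s where s: "s \<ge> 0" "s \<le> s0 + C * integral {M0/2 .. 2^n * M0 / 2} h" "2^n * M0 \<le> y s"
      using iter[of n] by blast
    have "1 \<le> (2::real)^n" by simp
    then have "M0/2 \<le> 2^n * M0 / 2" using M0 mult_right_mono[of 1 "2^n" M0] by simp
    then have "C * integral {M0/2 .. 2^n * M0 / 2} h \<le> C * I" using intle Cnn by (intro mult_left_mono) auto
    then show ?thesis using s unfolding S_def by (intro bexI[of _ s]) auto
  qed
  have "{0..S} \<subseteq> {t. -\<delta> \<le> t \<and> ereal t < T}" using dpos TI by auto
  then have "continuous_on {0..S} y" using continuous_on_subset[OF ycont] by blast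
  moreover have "{0..S} \<noteq> {}" using sS[of 0] by auto
  ultimately obtain x1 where x1: "x1 \<in> {0..S}" "\<And>x. x \<in> {0..S} \<Longrightarrow> y x \<le> y x1"
    using continuous_attains_sup[of "{0..S}" y] by auto
  obtain n where n: "y x1 < 2^n" using real_arch_pow[of 2 "y x1"] by auto
  obtain s where "s \<in> {0..S}" "2^n * M0 \<le> y s" using sS by blast
  moreover have "(2::real)^n \<le> 2^n * M0" using M0 by simp
  ultimately show False using x1(2)[of s] n by linarith
qed

end

locale tonelli =
  fixes \<delta> a E L W Bf K :: real and w fh yb :: "real \<Rightarrow> real"
  assumes dpos: "0 < \<delta>" and apos: "0 < a" and Epos: "0 < E"
    and wcont: "continuous_on {0..\<delta>} w" and wnn: "\<And>r. r \<in> {0..\<delta>} \<Longrightarrow> 0 \<le> w r"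
    and wle: "\<And>r. r \<in> {0..\<delta>} \<Longrightarrow> w r \<le> W"
    and fhcont: "continuous_on UNIV fh" and fhnn: "\<And>x. 0 \<le> fh x" and fhle: "\<And>x. fh x \<le> Bf"
    and Kdef: "K = W * \<delta> * Bf" and KE: "K * E \<le> 1"
    and fhuc: "\<And>e. 0 < e \<Longrightarrow> \<exists>d>0. \<forall>x x'. \<bar>x - x'\<bar> < d \<longrightarrow> \<bar>fh x - fh x'\<bar> < e"
    and ybcont: "continuous_on {-\<delta>..a} yb" and yba: "yb a = L"
begin

definition Q :: "(real \<Rightarrow> real) \<Rightarrow> real \<Rightarrow> real" where
  "Q v \<tau> = integral {0..\<delta>} (\<lambda>r. w r * fh (v (\<tau> - r)))"

definition Sh :: "real \<Rightarrow> (real \<Rightarrow> real) \<Rightarrow> real \<Rightarrow> real" where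
  "Sh h u s = (if s \<le> a then yb s else u (max a (s - h)))"

lemma Wnn: "0 \<le> W" using wnn[of 0] wle[of 0] dpos by auto
lemma Bfnn: "0 \<le> Bf" using fhnn[of 0] fhle[of 0] by auto
lemma Knn: "0 \<le> K" using Wnn Bfnn dpos Kdef by simp

lemma Qint_cont:
  assumes "continuous_on {\<tau>-\<delta>..\<tau>} v"
  shows "continuous_on {0..\<delta>} (\<lambda>r. w r * fh (v (\<tau> - r)))"
proof (intro continuous_on_mult wcont)
  have "continuous_on {0..\<delta>} (\<lambda>r. v (\<tau> - r))"
    by (rule continuous_on_compose2[OF assms]) (auto intro!: continuous_intros)
  then show "continuous_on {0..\<delta>} (\<lambda>r. fh (v (\<tau> - r)))"
    by (rule continuous_on_compose2[OF fhcont]) auto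
qed

lemma Qint:
  assumes "continuous_on {\<tau>-\<delta>..\<tau>} v"
  shows "(\<lambda>r. w r * fh (v (\<tau> - r))) integrable_on {0..\<delta>}"
  by (rule integrable_continuous_interval[OF Qint_cont[OF assms]])

lemma Qbnd:
  assumes "continuous_on {\<tau>-\<delta>..\<tau>} v"
  shows "0 \<le> Q v \<tau> \<and> Q v \<tau> \<le> K"
proof
  show "0 \<le> Q v \<tau>" unfolding Q_def
    by (rule integral_nonneg[OF Qint[OF assms]]) (simp add: wnn fhnn)
  have "Q v \<tau> \<le> integral {0..\<delta>} (\<lambda>_. W * Bf)" unfolding Q_def
  proof (rule integral_le[OF Qint[OF assms]])
    show "(\<lambda>_. W * Bf) integrable_on {0..\<delta>}"
      by (rule integrable_continuous_interval) (rule continuous_on_const)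
    fix r assume r: "r \<in> {0..\<delta>}"
    show "w r * fh (v (\<tau> - r)) \<le> W * Bf"
      by (rule mult_mono) (use r wle wnn fhle fhnn Wnn in auto)
  qed
  also have "\<dots> = K" using dpos Kdef by simp
  finally show "Q v \<tau> \<le> K" .
qed

lemma Qdiff:
  assumes "continuous_on {\<tau>-\<delta>..\<tau>} v" "continuous_on {\<tau>-\<delta>..\<tau>} v'"
    and "\<And>s. s \<in> {\<tau>-\<delta>..\<tau>} \<Longrightarrow> \<bar>fh (v s) - fh (v' s)\<bar> \<le> e"
  shows "\<bar>Q v \<tau> - Q v' \<tau>\<bar> \<le> W * \<delta> * e"
proof -
  let ?g = "\<lambda>r. w r * fh (v (\<tau> - r)) - w r * fh (v' (\<tau> - r))"
  have gi: "?g integrable_on {0..\<delta>}" by (intro integrable_diff Qint assms)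
  have eq: "Q v \<tau> - Q v' \<tau> = integral {0..\<delta>} ?g"
    unfolding Q_def by (rule Henstock_Kurzweil_Integration.integral_diff[symmetric]) (intro Qint assms)+
  have pt: "\<bar>?g r\<bar> \<le> W * e" if r: "r \<in> {0..\<delta>}" for r
  proof -
    have "\<bar>?g r\<bar> = w r * \<bar>fh (v (\<tau> - r)) - fh (v' (\<tau> - r))\<bar>"
      using wnn[OF r] by (simp add: abs_mult right_diff_distrib[symmetric])
    also have "\<dots> \<le> W * e"
      by (rule mult_mono) (use r wle wnn Wnn assms(3)[of "\<tau> - r"] in auto)
    finally show ?thesis .
  qed
  have ci: "(\<lambda>_. W * e) integrable_on {0..\<delta>}"
    by (rule integrable_continuous_interval) (rule continuous_on_const)
  have "integral {0..\<delta>} ?g \<le> integral {0..\<delta>} (\<lambda>_. W * e)"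
    by (rule integral_le[OF gi ci]) (use pt in force)
  moreover have "integral {0..\<delta>} (\<lambda>_. - (W * e)) \<le> integral {0..\<delta>} ?g"
    by (rule integral_le[OF _ gi]) (use pt in \<open>force intro: integrable_continuous_interval\<close>)+
  ultimately show ?thesis unfolding eq using dpos by (simp add: abs_le_iff algebra_simps)
qed

lemma Qcont:
  assumes "continuous_on {p-\<delta>..q} v"
  shows "continuous_on {p..q} (Q v)"
proof -
  have c: "continuous_on ({p..q} \<times> cbox 0 \<delta>) (\<lambda>(x, r). w r * fh (v (x - r)))"
  proof -
    have c1: "continuous_on ({p..q} \<times> cbox 0 \<delta>) (\<lambda>z. w (snd z))"
      by (rule continuous_on_compose2[OF wcont]) (auto intro!: continuous_intros simp: cbox_interval)
    have c2: "continuous_on ({p..q} \<times> cbox 0 \<delta>) (\<lambda>z. v (fst z - snd z))"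
      by (rule continuous_on_compose2[OF assms]) (auto intro!: continuous_intros simp: cbox_interval)
    have c3: "continuous_on ({p..q} \<times> cbox 0 \<delta>) (\<lambda>z. fh (v (fst z - snd z)))"
      by (rule continuous_on_compose2[OF fhcont c2]) auto
    show ?thesis using continuous_on_mult[OF c1 c3] by (simp add: case_prod_beta)
  qed
  show ?thesis
    using integral_continuous_on_param[OF c] unfolding Q_def cbox_interval by simp
qed

end

context tonelli
begin

lemma Sh_cont:
  assumes "continuous_on {a..a+E} u" "u a = L" "0 < h"
  shows "continuous_on {-\<delta>..a+E} (Sh h u)"
proof -
  have "continuous_on {-\<delta>..a+E} (\<lambda>s. if s \<le> a then yb s else u (max a (s - h)))"
  proof (rule continuous_on_cases_1)
    have "{t \<in> {-\<delta>..a+E}. t \<le> a} = {-\<delta>..a}" using apos dpos Epos by auto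
    then show "continuous_on {t \<in> {-\<delta>..a+E}. t \<le> a} yb" using ybcont by simp
    have "continuous_on {t \<in> {-\<delta>..a+E}. a \<le> t} (\<lambda>s. max a (s - h))"
      by (intro continuous_intros)
    then show "continuous_on {t \<in> {-\<delta>..a+E}. a \<le> t} (\<lambda>s. u (max a (s - h)))"
      by (rule continuous_on_compose2[OF assms(1)]) (use Epos assms(3) in auto)
    show "a \<in> {-\<delta>..a+E} \<Longrightarrow> yb a = u (max a (a - h))"
      using assms yba by (simp add: max_def)
  qed
  then show ?thesis unfolding Sh_def[abs_def] .
qed

lemma Sh_local:
  assumes "\<And>x. x \<in> {a..c} \<Longrightarrow> u' x = u x" "s \<le> c + h" "a \<le> c"
  shows "Sh h u' s = Sh h u s"
  unfolding Sh_def using assms by (auto simp: max_def)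

lemma Q_local:
  assumes "\<And>s. s \<le> \<tau> \<Longrightarrow> v' s = v s"
  shows "Q v' \<tau> = Q v \<tau>"
  unfolding Q_def
  by (rule Henstock_Kurzweil_Integration.integral_cong) (use assms dpos in auto)

lemma tonelli_step:
  assumes "0 < h"
  shows "\<exists>u. continuous_on {a..a+E} u \<and> u a = L \<and>
     (\<forall>t\<in>{a..a+E}. t \<le> a + real k * h \<longrightarrow> u t = L + integral {a..t} (Q (Sh h u)))"
proof (induction k)
  case 0
  show ?case by (intro exI[of _ "\<lambda>_. L"]) (auto intro: continuous_on_const)
next
  case (Suc k)
  then obtain u where u: "continuous_on {a..a+E} u" "u a = L"
      "\<And>t. t\<in>{a..a+E} \<Longrightarrow> t \<le> a + real k * h \<Longrightarrow> u t = L + integral {a..t} (Q (Sh h u))"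
    by blast
  define c where "c = a + real k * h"
  have ca: "a \<le> c" unfolding c_def using assms by simp
  define J where "J t = L + integral {a..t} (Q (Sh h u))" for t
  define u' where "u' t = (if t \<le> c then u t else J t)" for t
  have Shc: "continuous_on {-\<delta>..a+E} (Sh h u)" by (rule Sh_cont[OF u(1,2) assms])
  have Qc: "continuous_on {a..a+E} (Q (Sh h u))"
    by (rule Qcont, rule continuous_on_subset[OF Shc]) (use apos in auto)
  have Jc: "continuous_on {a..a+E} J"
    unfolding J_def by (intro continuous_intros indefinite_integral_continuous_1 integrable_continuous_interval Qc)
  have u'c: "continuous_on {a..a+E} u'"
    unfolding u'_def
  proof (rule continuous_on_cases_1)
    show "continuous_on {t \<in> {a..a + E}. t \<le> c} u" by (rule continuous_on_subset[OF u(1)]) auto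
    show "continuous_on {t \<in> {a..a + E}. c \<le> t} J" by (rule continuous_on_subset[OF Jc]) auto
    show "c \<in> {a..a + E} \<Longrightarrow> u c = J c" using u(3)[of c] unfolding J_def c_def by auto
  qed
  have agree: "u' x = u x" if "x \<in> {a..c}" for x using that unfolding u'_def by auto
  have QQ: "Q (Sh h u') \<tau> = Q (Sh h u) \<tau>" if "\<tau> \<le> c + h" for \<tau>
    by (rule Q_local, rule Sh_local[OF agree]) (use that ca in auto)
  show ?case
  proof (intro exI[of _ u'] conjI ballI impI)
    show "continuous_on {a..a + E} u'" by (rule u'c)
    show "u' a = L" using u(2) ca unfolding u'_def by auto
    fix t assume t: "t \<in> {a..a + E}" "t \<le> a + real (Suc k) * h"
    have tc: "t \<le> c + h" using t unfolding c_def by (simp add: algebra_simps)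
    have "integral {a..t} (Q (Sh h u')) = integral {a..t} (Q (Sh h u))"
      by (rule Henstock_Kurzweil_Integration.integral_cong, rule QQ) (use tc in auto)
    moreover have "u' t = L + integral {a..t} (Q (Sh h u))"
    proof (cases "t \<le> c")
      case True then show ?thesis using u(3)[OF t(1)] unfolding u'_def c_def by auto
    next
      case False then show ?thesis unfolding u'_def J_def by auto
    qed
    ultimately show "u' t = L + integral {a..t} (Q (Sh h u'))" by simp
  qed
qed

lemma tonelli_exists:
  assumes "0 < h"
  shows "\<exists>u. continuous_on {a..a+E} u \<and> u a = L \<and>
     (\<forall>t\<in>{a..a+E}. u t = L + integral {a..t} (Q (Sh h u)))"
proof -
  obtain k where k: "E < real k * h" using ex_less_of_nat_mult[OF assms] by blast
  from tonelli_step[OF assms, of k] obtain u where u: "continuous_on {a..a+E} u" "u a = L"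
    "\<forall>t\<in>{a..a+E}. t \<le> a + real k * h \<longrightarrow> u t = L + integral {a..t} (Q (Sh h u))" by blast
  show ?thesis using u k by (intro exI[of _ u]) auto
qed

lemma tonelli_props:
  assumes h: "0 < h" and u: "continuous_on {a..a+E} u" "u a = L"
    "\<forall>t\<in>{a..a+E}. u t = L + integral {a..t} (Q (Sh h u))"
  shows "\<And>t. t \<in> {a..a+E} \<Longrightarrow> L \<le> u t \<and> u t \<le> L + 1"
    and "\<And>t t'. t \<in> {a..a+E} \<Longrightarrow> t' \<in> {a..a+E} \<Longrightarrow> \<bar>u t - u t'\<bar> \<le> K * \<bar>t - t'\<bar>"
proof -
  have Shc: "continuous_on {-\<delta>..a+E} (Sh h u)" by (rule Sh_cont[OF u(1,2) h])
  have Qc: "continuous_on {a..a+E} (Q (Sh h u))"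
    by (rule Qcont, rule continuous_on_subset[OF Shc]) (use apos in auto)
  have Qb: "0 \<le> Q (Sh h u) \<tau> \<and> Q (Sh h u) \<tau> \<le> K" if "\<tau> \<in> {a..a+E}" for \<tau>
    by (rule Qbnd, rule continuous_on_subset[OF Shc]) (use that apos in auto)
  have Qi: "Q (Sh h u) integrable_on {p..q}" if "a \<le> p" "q \<le> a+E" for p q
    by (rule integrable_continuous_interval, rule continuous_on_subset[OF Qc]) (use that in auto)
  have incr: "0 \<le> u t' - u t \<and> u t' - u t \<le> K * (t' - t)"
    if tt: "t \<in> {a..a+E}" "t' \<in> {a..a+E}" "t \<le> t'" for t t'
  proof -
    have comb: "integral {a..t} (Q (Sh h u)) + integral {t..t'} (Q (Sh h u)) = integral {a..t'} (Q (Sh h u))"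
      by (rule Henstock_Kurzweil_Integration.integral_combine, rule_tac [3] Qi) (use tt in auto)
    have d: "u t' - u t = integral {t..t'} (Q (Sh h u))" using u(3) tt comb by simp
    have "0 \<le> integral {t..t'} (Q (Sh h u))"
      by (rule integral_nonneg, rule Qi) (use tt Qb in auto)
    moreover have "integral {t..t'} (Q (Sh h u)) \<le> integral {t..t'} (\<lambda>_. K)"
      by (rule integral_le, rule Qi) (use tt Qb in \<open>auto intro: integrable_continuous_interval continuous_on_const\<close>)
    moreover have "integral {t..t'} (\<lambda>_. K) = K * (t' - t)" using tt by simp
    ultimately show ?thesis using d tt(3) by (simp add: mult.commute)
  qed
  show "L \<le> u t \<and> u t \<le> L + 1" if t: "t \<in> {a..a+E}" for t
  proof -
    have "0 \<le> u t - u a \<and> u t - u a \<le> K * (t - a)" by (rule incr) (use t Epos in auto)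
    moreover have "K * (t - a) \<le> K * E" using t Knn by (intro mult_left_mono) auto
    ultimately show ?thesis using KE u(2) by auto
  qed
  show "\<bar>u t - u t'\<bar> \<le> K * \<bar>t - t'\<bar>" if "t \<in> {a..a+E}" "t' \<in> {a..a+E}" for t t'
  proof (cases "t \<le> t'")
    case True then show ?thesis using incr[OF that True] by (simp add: abs_if)
  next
    case False then show ?thesis using incr[OF that(2,1)] by (simp add: abs_if)
  qed
qed

end

lemma int_diff_bound:
  fixes p q :: "real \<Rightarrow> real"
  assumes "p integrable_on {\<alpha>..\<beta>}" "q integrable_on {\<alpha>..\<beta>}" "\<alpha> \<le> \<beta>"
    and "\<And>x. x \<in> {\<alpha>..\<beta>} \<Longrightarrow> \<bar>p x - q x\<bar> \<le> c"
  shows "\<bar>integral {\<alpha>..\<beta>} p - integral {\<alpha>..\<beta>} q\<bar> \<le> c * (\<beta> - \<alpha>)"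
proof -
  have gi: "(\<lambda>x. p x - q x) integrable_on {\<alpha>..\<beta>}" by (intro integrable_diff assms)
  have eq: "integral {\<alpha>..\<beta>} p - integral {\<alpha>..\<beta>} q = integral {\<alpha>..\<beta>} (\<lambda>x. p x - q x)"
    by (rule Henstock_Kurzweil_Integration.integral_diff[symmetric]) (intro assms)+
  have ci: "(\<lambda>_. c) integrable_on {\<alpha>..\<beta>}" "(\<lambda>_. - c) integrable_on {\<alpha>..\<beta>}"
    by (rule integrable_continuous_interval, rule continuous_on_const)+
  have "integral {\<alpha>..\<beta>} (\<lambda>x. p x - q x) \<le> integral {\<alpha>..\<beta>} (\<lambda>_. c)"
    by (rule integral_le[OF gi ci(1)]) (use assms(4) in force)
  moreover have "integral {\<alpha>..\<beta>} (\<lambda>_. - c) \<le> integral {\<alpha>..\<beta>} (\<lambda>x. p x - q x)"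
    by (rule integral_le[OF ci(2) gi]) (use assms(4) in force)
  ultimately show ?thesis unfolding eq using assms(3) by (simp add: abs_le_iff algebra_simps)
qed

lemma zero_by_eps:
  fixes D C :: real
  assumes "0 \<le> C" "\<And>e. 0 < e \<Longrightarrow> \<bar>D\<bar> \<le> C * e"
  shows "D = 0"
proof (rule ccontr)
  assume "D \<noteq> 0"
  then have p: "0 < \<bar>D\<bar>" by simp
  define e where "e = \<bar>D\<bar> / (2 * (C + 1))"
  have ep: "0 < e" unfolding e_def using p assms(1) by simp
  have "C * e < \<bar>D\<bar>"
  proof -
    have "C * e \<le> (C + 1) * e" using ep by simp
    also have "\<dots> = \<bar>D\<bar> / 2" unfolding e_def using assms(1) by (simp add: field_simps)
    finally show ?thesis using p by simp
  qed
  then show False using assms(2)[OF ep] by simp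
qed

context tonelli
begin

lemma limit_solution:
  obtains g where "continuous_on {a..a+E} g" "g a = L" "\<forall>t\<in>{a..a+E}. L \<le> g t \<and> g t \<le> L + 1"
    "\<forall>t\<in>{a..a+E}. g t = L + integral {a..t} (Q (\<lambda>s. if s \<le> a then yb s else g s))"
    "continuous_on {-\<delta>..a+E} (\<lambda>s. if s \<le> a then yb s else g s)"
proof -
  define hh where "hh n = 1 / (real n + 1)" for n
  have hhp: "0 < hh n" for n unfolding hh_def by simp
  have "\<exists>Uu. \<forall>n. continuous_on {a..a+E} (Uu n) \<and> Uu n a = L \<and>
     (\<forall>t\<in>{a..a+E}. Uu n t = L + integral {a..t} (Q (Sh (hh n) (Uu n))))"
    by (rule choice) (use tonelli_exists[OF hhp] in blast)
  then obtain Uu where Uu: "\<And>n. continuous_on {a..a+E} (Uu n)" "\<And>n. Uu n a = L"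
    "\<And>n. \<forall>t\<in>{a..a+E}. Uu n t = L + integral {a..t} (Q (Sh (hh n) (Uu n)))" by blast
  note P1 = tonelli_props(1)[OF hhp Uu(1) Uu(2) Uu(3)]
  note P2 = tonelli_props(2)[OF hhp Uu(1) Uu(2) Uu(3)]
  obtain g k where g: "continuous_on {a..a+E} g" "strict_mono (k :: nat \<Rightarrow> nat)"
    "\<And>e. 0 < e \<Longrightarrow> \<exists>N. \<forall>n x. n \<ge> N \<and> x \<in> {a..a+E} \<longrightarrow> norm (Uu (k n) x - g x) < e"
  proof (rule Arzela_Ascoli[of "{a..a+E}" Uu "\<bar>L\<bar> + 1"])
    show "compact {a..a+E}" by simp
    fix n x assume "x \<in> {a..a+E}"
    then show "norm (Uu n x) \<le> \<bar>L\<bar> + 1" using P1[of x n] by auto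
  next
    fix x e assume x: "x \<in> {a..a+E}" and e: "0 < (e::real)"
    show "\<exists>d>0. \<forall>n y. y \<in> {a..a+E} \<and> norm (x - y) < d \<longrightarrow> norm (Uu n x - Uu n y) < e"
    proof (intro exI[of _ "e / (K + 1)"] conjI allI impI)
      show "0 < e / (K + 1)" using e Knn by simp
      fix n y assume y: "y \<in> {a..a+E} \<and> norm (x - y) < e / (K + 1)"
      have "\<bar>Uu n x - Uu n y\<bar> \<le> K * \<bar>x - y\<bar>" using P2[OF x] y by blast
      also have "\<dots> \<le> K * (e / (K + 1))" using y Knn by (intro mult_left_mono) auto
      also have "\<dots> < e" using e Knn by (simp add: field_simps)
      finally show "norm (Uu n x - Uu n y) < e" by simp
    qed
  qed blast
  have uc: "\<And>e. 0 < e \<Longrightarrow> \<exists>N. \<forall>n x. n \<ge> N \<and> x \<in> {a..a+E} \<longrightarrow> \<bar>Uu (k n) x - g x\<bar> < e"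
    using g(3) by simp
  have close: "\<bar>Uu (k n) x - g x\<bar> < e" if "x \<in> {a..a+E}" "n \<ge> N"
    "\<forall>n x. n \<ge> N \<and> x \<in> {a..a+E} \<longrightarrow> \<bar>Uu (k n) x - g x\<bar> < e" for x n N e
    using that by blast
  have ga: "g a = L"
  proof -
    have "\<bar>g a - L\<bar> \<le> 1 * e" if ep: "0 < e" for e
    proof -
      obtain N where "\<forall>n x. n \<ge> N \<and> x \<in> {a..a+E} \<longrightarrow> \<bar>Uu (k n) x - g x\<bar> < e" using uc[OF ep] by blast
      then have "\<bar>Uu (k N) a - g a\<bar> < e" using Epos by auto
      then show ?thesis using Uu(2) by simp
    qed
    then have "g a - L = 0" by (intro zero_by_eps[of 1]) auto
    then show ?thesis by simp
  qed
  have gb: "L \<le> g t \<and> g t \<le> L + 1" if t: "t \<in> {a..a+E}" for t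
  proof -
    have "L \<le> g t + e \<and> g t \<le> L + 1 + e" if ep: "0 < e" for e
    proof -
      obtain N where "\<forall>n x. n \<ge> N \<and> x \<in> {a..a+E} \<longrightarrow> \<bar>Uu (k n) x - g x\<bar> < e" using uc[OF ep] by blast
      then have "\<bar>Uu (k N) t - g t\<bar> < e" using t by auto
      then show ?thesis using P1[OF t, of "k N"] by auto
    qed
    then show ?thesis by (meson field_le_epsilon)
  qed
  define G where "G s = (if s \<le> a then yb s else g s)" for s
  have Gc: "continuous_on {-\<delta>..a+E} G"
    unfolding G_def
  proof (rule continuous_on_cases_1)
    have "{t \<in> {-\<delta>..a+E}. t \<le> a} = {-\<delta>..a}" using apos dpos Epos by auto
    then show "continuous_on {t \<in> {-\<delta>..a+E}. t \<le> a} yb" using ybcont by simp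
    show "continuous_on {t \<in> {-\<delta>..a+E}. a \<le> t} g" by (rule continuous_on_subset[OF g(1)]) auto
    show "a \<in> {-\<delta>..a+E} \<Longrightarrow> yb a = g a" using ga yba by simp
  qed
  have QGc: "continuous_on {a..a+E} (Q G)"
    by (rule Qcont, rule continuous_on_subset[OF Gc]) (use apos in auto)
  have ident: "g t = L + integral {a..t} (Q G)" if t: "t \<in> {a..a+E}" for t
  proof -
    have "g t - L - integral {a..t} (Q G) = 0"
    proof (rule zero_by_eps[of "1 + E * W * \<delta>"])
      show "0 \<le> 1 + E * W * \<delta>" using Epos Wnn dpos by simp
      fix e :: real assume e: "0 < e"
      obtain d where d: "d > 0" "\<forall>x x'. \<bar>x - x'\<bar> < d \<longrightarrow> \<bar>fh x - fh x'\<bar> < e" using fhuc[OF e] by blast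
      obtain N1 where N1: "\<forall>n x. n \<ge> N1 \<and> x \<in> {a..a+E} \<longrightarrow> \<bar>Uu (k n) x - g x\<bar> < min e (d/2)"
        using uc[of "min e (d/2)"] e d by auto
      obtain N2 where N2: "K < real N2 * (d/2)" using ex_less_of_nat_mult[of "d/2" K] d by auto
      define n where "n = max N1 N2"
      define kn where "kn = k n"
      have kn: "n \<le> kn" unfolding kn_def using seq_suble[OF g(2)] by simp
      have Kh: "K * hh kn < d/2"
      proof -
        have r: "real N2 \<le> real kn + 1" using kn unfolding n_def by simp
        have "real N2 * (d/2) \<le> (real kn + 1) * (d/2)" using mult_right_mono[OF r, of "d/2"] d by simp
        then have "K < (real kn + 1) * (d/2)" using N2 by linarith
        then show ?thesis unfolding hh_def by (simp add: field_simps)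
      qed
      have cl: "\<bar>Uu kn x - g x\<bar> < min e (d/2)" if "x \<in> {a..a+E}" for x
        using N1 that unfolding kn_def n_def by auto
      let ?u = "Uu kn" and ?h = "hh kn"
      have Shc: "continuous_on {-\<delta>..a+E} (Sh ?h ?u)" by (rule Sh_cont[OF Uu(1) Uu(2) hhp])
      have QSc: "continuous_on {a..a+E} (Q (Sh ?h ?u))"
        by (rule Qcont, rule continuous_on_subset[OF Shc]) (use apos in auto)
      have pt: "\<bar>fh (Sh ?h ?u s) - fh (G s)\<bar> \<le> e" if s: "s \<le> a + E" for s
      proof (cases "s \<le> a")
        case True then show ?thesis unfolding Sh_def G_def using e by simp
      next
        case False
        define m' where "m' = max a (s - ?h)"
        have sS: "s \<in> {a..a+E}" using False s by auto
        have mS: "m' \<in> {a..a+E}" unfolding m'_def using False s hhp[of kn] by auto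
        have "\<bar>m' - s\<bar> \<le> ?h" unfolding m'_def using False hhp[of kn] by auto
        then have "\<bar>?u m' - ?u s\<bar> \<le> K * ?h"
          using P2[OF mS sS, of kn] Knn by (meson mult_left_mono order_trans)
        moreover have "\<bar>?u s - g s\<bar> < d/2" using cl[OF sS] by simp
        ultimately have "\<bar>?u m' - g s\<bar> < d" using Kh by linarith
        then have "\<bar>fh (?u m') - fh (g s)\<bar> < e" using d(2) by blast
        then show ?thesis unfolding Sh_def G_def m'_def using False by simp
      qed
      have Qd: "\<bar>Q (Sh ?h ?u) \<tau> - Q G \<tau>\<bar> \<le> W * \<delta> * e" if \<tau>: "\<tau> \<in> {a..t}" for \<tau>
      proof (rule Qdiff)
        show "continuous_on {\<tau> - \<delta>..\<tau>} (Sh ?h ?u)"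
          by (rule continuous_on_subset[OF Shc]) (use \<tau> t apos in auto)
        show "continuous_on {\<tau> - \<delta>..\<tau>} G"
          by (rule continuous_on_subset[OF Gc]) (use \<tau> t apos in auto)
        fix s assume "s \<in> {\<tau> - \<delta>..\<tau>}"
        then show "\<bar>fh (Sh ?h ?u s) - fh (G s)\<bar> \<le> e" using pt \<tau> t by auto
      qed
      have "\<bar>integral {a..t} (Q (Sh ?h ?u)) - integral {a..t} (Q G)\<bar> \<le> W * \<delta> * e * (t - a)"
      proof (rule int_diff_bound)
        show "Q (Sh ?h ?u) integrable_on {a..t}"
          by (rule integrable_continuous_interval, rule continuous_on_subset[OF QSc]) (use t in auto)
        show "Q G integrable_on {a..t}"
          by (rule integrable_continuous_interval, rule continuous_on_subset[OF QGc]) (use t in auto)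
      qed (use t Qd in auto)
      also have "\<dots> \<le> W * \<delta> * e * E"
        using t Wnn dpos e by (intro mult_left_mono) auto
      finally have I: "\<bar>integral {a..t} (Q (Sh ?h ?u)) - integral {a..t} (Q G)\<bar> \<le> E * W * \<delta> * e"
        by (simp add: algebra_simps)
      have ut: "?u t = L + integral {a..t} (Q (Sh ?h ?u))" using Uu(3)[of kn] t by blast
      have "\<bar>?u t - g t\<bar> < e" using cl[OF t] by simp
      then show "\<bar>g t - L - integral {a..t} (Q G)\<bar> \<le> (1 + E * W * \<delta>) * e"
        using I ut by (simp add: algebra_simps abs_if split: if_splits)
    qed
    then show ?thesis by simp
  qed
  have Geq: "G = (\<lambda>s. if s \<le> a then yb s else g s)" by (rule ext) (simp add: G_def)
  show ?thesis
    by (rule that[OF g(1) ga]) (use gb ident Gc in \<open>auto simp: Geq\<close>)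
qed

lemma limit_solution':
  obtains g where "continuous_on {a..a+E} g" "g a = L" "\<forall>t\<in>{a..a+E}. L \<le> g t \<and> g t \<le> L + 1"
    "\<forall>t\<in>{a..a+E}. g t = L + integral {a..t}
        (\<lambda>\<tau>. integral {0..\<delta>} (\<lambda>r. w r * fh (if \<tau> - r \<le> a then yb (\<tau> - r) else g (\<tau> - r))))"
    "continuous_on {-\<delta>..a+E} (\<lambda>s. if s \<le> a then yb s else g s)"
    "\<And>p q. continuous_on {p..q}
        (\<lambda>\<tau>. integral {0..\<delta>} (\<lambda>r. w r * fh (if \<tau> - r \<le> a then yb (\<tau> - r) else g (\<tau> - r))))
       \<or> \<not> continuous_on {p-\<delta>..q} (\<lambda>s. if s \<le> a then yb s else g s)"
proof -
  obtain g where g: "continuous_on {a..a+E} g" "g a = L" "\<forall>t\<in>{a..a+E}. L \<le> g t \<and> g t \<le> L + 1"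
    "\<forall>t\<in>{a..a+E}. g t = L + integral {a..t} (Q (\<lambda>s. if s \<le> a then yb s else g s))"
    "continuous_on {-\<delta>..a+E} (\<lambda>s. if s \<le> a then yb s else g s)"
    using limit_solution by blast
  have Qe: "Q (\<lambda>s. if s \<le> a then yb s else g s) =
     (\<lambda>\<tau>. integral {0..\<delta>} (\<lambda>r. w r * fh (if \<tau> - r \<le> a then yb (\<tau> - r) else g (\<tau> - r))))"
    by (rule ext) (simp add: Q_def)
  show ?thesis
  proof (rule that[OF g(1,2,3) _ g(5)])
    show "\<forall>t\<in>{a..a+E}. g t = L + integral {a..t}
        (\<lambda>\<tau>. integral {0..\<delta>} (\<lambda>r. w r * fh (if \<tau> - r \<le> a then yb (\<tau> - r) else g (\<tau> - r))))"
      using g(4) unfolding Qe .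
    fix p q
    show "continuous_on {p..q}
        (\<lambda>\<tau>. integral {0..\<delta>} (\<lambda>r. w r * fh (if \<tau> - r \<le> a then yb (\<tau> - r) else g (\<tau> - r))))
       \<or> \<not> continuous_on {p-\<delta>..q} (\<lambda>s. if s \<le> a then yb s else g s)"
      using Qcont[of p q "\<lambda>s. if s \<le> a then yb s else g s"] unfolding Qe by blast
  qed
qed

end

lemma integral_cv:
  fixes \<phi> :: "real \<Rightarrow> real"
  shows "integral {t-d..t} (\<lambda>s. \<phi> (t - s)) = integral {0..d} \<phi>"
proof -
  have "integral {-d+t..0+t} (\<lambda>s. \<phi> (t - s)) = integral {-d..0} ((\<lambda>s. \<phi> (t - s)) \<circ> (+) t)"
    by (rule integral_shift_Icc_real[symmetric])
  also have "\<dots> = integral {-d..-0} (\<lambda>x. \<phi> (- x))" by (simp add: o_def)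
  also have "\<dots> = integral {0..d} \<phi>" by (rule Henstock_Kurzweil_Integration.integral_reflect_real)
  finally show ?thesis by simp
qed

lemma clamp_lip:
  fixes m U x x' :: real
  assumes "m \<le> U"
  shows "\<bar>min (max x m) U - min (max x' m) U\<bar> \<le> \<bar>x - x'\<bar>"
  using assms by (auto simp: min_def max_def abs_if)

lemma tendsto_Sup_left:
  fixes y :: "real \<Rightarrow> real"
  assumes "0 < a" and mono: "\<And>s t. 0 \<le> s \<Longrightarrow> s \<le> t \<Longrightarrow> t < a \<Longrightarrow> y s \<le> y t"
    and bdd: "bdd_above (y ` {0..<a})"
  shows "(y \<longlongrightarrow> (SUP t\<in>{0..<a}. y t)) (at_left a)"
proof -
  let ?L = "SUP t\<in>{0..<a}. y t"
  have ne: "{0..<a} \<noteq> {}" using assms by auto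
  show ?thesis unfolding tendsto_iff
  proof (intro allI impI)
    fix e :: real assume e: "0 < e"
    have "?L - e < ?L" using e by simp
    then obtain t0 where t0: "t0 \<in> {0..<a}" "?L - e < y t0"
      using less_cSUP_iff[OF ne bdd] by blast
    have "eventually (\<lambda>x. x \<in> {t0<..<a}) (at_left a)" using t0 by (intro eventually_at_left_real) auto
    then show "eventually (\<lambda>x. dist (y x) ?L < e) (at_left a)"
    proof (rule eventually_mono)
      fix x assume x: "x \<in> {t0<..<a}"
      have "y t0 \<le> y x" using mono[of t0 x] x t0 by auto
      moreover have "y x \<le> ?L" using x t0 by (intro cSUP_upper[OF _ bdd]) auto
      ultimately show "dist (y x) ?L < e" using t0 by (simp add: dist_real_def)
    qed
  qed
qed

context sol_ctx
begin

lemma partB: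
  assumes Ta: "T = ereal a" and yB: "\<forall>t. 0 \<le> t \<and> t < a \<longrightarrow> y t \<le> B"
  shows "\<exists>T' z. T < T' \<and> is_solution \<delta> w f \<psi> T' z \<and> (\<forall>t. -\<delta> \<le> t \<and> ereal t < T \<longrightarrow> z t = y t)"
proof -
  have apos: "0 < a" using Tpos Ta by simp
  have ymono: "y s \<le> y t" if "0 \<le> s" "s \<le> t" "t < a" for s t
    using y_mono[of s t] that Ta by simp
  have bdd: "bdd_above (y ` {0..<a})" using yB by (intro bdd_aboveI[of _ B]) auto
  define L where "L = (SUP t\<in>{0..<a}. y t)"
  have ylim: "(y \<longlongrightarrow> L) (at_left a)" unfolding L_def by (rule tendsto_Sup_left[OF apos ymono bdd])
  have yleL: "y t \<le> L" if "0 \<le> t" "t < a" for t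
    unfolding L_def by (rule cSUP_upper[OF _ bdd]) (use that in auto)
  have y0: "0 < y 0" using ypos[of 0] dpos Ta apos by auto
  have y0L: "y 0 \<le> L" using yleL[of 0] apos by simp
  have dom: "{t. -\<delta> \<le> t \<and> ereal t < T} = {-\<delta>..<a}" using Ta by auto
  have ycont': "continuous_on {-\<delta>..<a} y" using ycont unfolding dom .
  have c0: "continuous_on {-\<delta>..0} y" by (rule continuous_on_subset[OF ycont']) (use apos in auto)
  obtain xm where xm: "xm \<in> {-\<delta>..0}" "\<And>x. x \<in> {-\<delta>..0} \<Longrightarrow> y xm \<le> y x"
    using continuous_attains_inf[OF compact_Icc _ c0] dpos by auto
  obtain xM where xM: "xM \<in> {-\<delta>..0}" "\<And>x. x \<in> {-\<delta>..0} \<Longrightarrow> y x \<le> y xM"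
    using continuous_attains_sup[OF compact_Icc _ c0] dpos by auto
  define m where "m = y xm"
  define Mx where "Mx = y xM"
  have mpos: "0 < m" unfolding m_def using ypos[of xm] xm(1) Ta apos by auto
  have my0: "m \<le> y 0" unfolding m_def using xm(2)[of 0] dpos by auto
  define U where "U = max Mx L + 1"
  have mU: "m \<le> U" using my0 y0L unfolding U_def by auto
  define yb where "yb t = (if t < a then y t else L)" for t
  have yb_range: "m \<le> yb s \<and> yb s \<le> U" if s: "s \<in> {-\<delta>..a}" for s
  proof (cases "s < a")
    case False then show ?thesis using my0 y0L unfolding yb_def U_def by auto
  next
    case True
    show ?thesis
    proof (cases "s \<le> 0")
      case True
      then have "s \<in> {-\<delta>..0}" using s by auto
      then show ?thesis using xm(2) xM(2) \<open>s < a\<close> unfolding yb_def m_def U_def Mx_def by force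
    next
      case False
      then have "y 0 \<le> y s" "y s \<le> L" using ymono[of 0 s] yleL[of s] \<open>s < a\<close> by auto
      then show ?thesis using my0 \<open>s < a\<close> unfolding yb_def U_def by auto
    qed
  qed
  have ybcont: "continuous_on {-\<delta>..a} yb"
    unfolding continuous_on_eq_continuous_within
  proof
    fix x assume x: "x \<in> {-\<delta>..a}"
    show "continuous (at x within {-\<delta>..a}) yb"
    proof (cases "x < a")
      case True
      have "continuous (at x within {-\<delta>..<a}) y"
        using ycont' x True by (simp add: continuous_on_eq_continuous_within)
      moreover have "at x within {-\<delta>..a} = at x within {-\<delta>..<a}"
        by (rule at_within_nhd[of x "{..<a}"]) (use True in auto)
      ultimately have "continuous (at x within {-\<delta>..a}) y" by simp
      then show ?thesis
      proof (rule continuous_transform_within)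
        show "0 < a - x" using True by simp
        show "x \<in> {-\<delta>..a}" by (rule x)
        fix x' assume "x' \<in> {-\<delta>..a}" "dist x' x < a - x"
        then show "y x' = yb x'" unfolding yb_def by (auto simp: dist_real_def)
      qed
    next
      case False
      then have xa: "x = a" using x by auto
      have ev: "eventually (\<lambda>t. y t = yb t) (at_left a)"
        using eventually_at_left_real[of "a - 1" a] by (rule eventually_mono) (auto simp: yb_def)
      have "(yb \<longlongrightarrow> L) (at_left a)" using ylim tendsto_cong[OF ev] by simp
      moreover have "at a within {-\<delta>..a} = at_left a" by (rule at_within_Icc_at_left) (use dpos apos in auto)
      ultimately show ?thesis unfolding xa continuous_within by (simp add: yb_def)
    qed
  qed
  have yba: "yb a = L" unfolding yb_def by simp
  define fh where "fh x = f (min (max x m) U)" for x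
  have clamp_in: "min (max x m) U \<in> {m..U}" for x using mU by auto
  have fcI: "continuous_on {m..U} f" by (rule continuous_on_subset[OF fcont]) (use mpos in auto)
  have fhcont: "continuous_on UNIV fh" unfolding fh_def
    by (rule continuous_on_compose2[OF fcI]) (auto intro!: continuous_intros simp: mU)
  have fh_eq: "fh x = f x" if "x \<in> {m..U}" for x using that unfolding fh_def by auto
  have fhpos: "0 < fh x" for x unfolding fh_def using clamp_in[of x] mpos by (intro fpos) auto
  obtain xB where xB: "xB \<in> {m..U}" "\<And>x. x \<in> {m..U} \<Longrightarrow> f x \<le> f xB"
    using continuous_attains_sup[OF compact_Icc _ fcI] mU by auto
  define Bf where "Bf = f xB"
  have fhle: "fh x \<le> Bf" for x unfolding fh_def Bf_def using xB(2) clamp_in by blast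
  have fhuc: "\<exists>d>0. \<forall>x x'. \<bar>x - x'\<bar> < d \<longrightarrow> \<bar>fh x - fh x'\<bar> < e" if e: "0 < e" for e
  proof -
    have "uniformly_continuous_on {m..U} f" by (rule compact_uniformly_continuous[OF fcI compact_Icc])
    then obtain d where d: "d > 0" "\<forall>x\<in>{m..U}. \<forall>x'\<in>{m..U}. dist x' x < d \<longrightarrow> dist (f x') (f x) < e"
      unfolding uniformly_continuous_on_def using e by blast
    show ?thesis
    proof (intro exI[of _ d] conjI allI impI)
      fix x x' :: real assume xx: "\<bar>x - x'\<bar> < d"
      have "\<bar>min (max x m) U - min (max x' m) U\<bar> < d" using clamp_lip[OF mU, of x x'] xx by linarith
      then have "dist (f (min (max x m) U)) (f (min (max x' m) U)) < e"
        using d(2) clamp_in by (simp add: dist_real_def)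
      then show "\<bar>fh x - fh x'\<bar> < e" unfolding fh_def by (simp add: dist_real_def)
    qed (rule d(1))
  qed
  have wc0: "continuous_on {0..\<delta>} w" by (rule continuous_on_subset[OF wcont]) auto
  obtain xW where xW: "xW \<in> {0..\<delta>}" "\<And>x. x \<in> {0..\<delta>} \<Longrightarrow> w x \<le> w xW"
    using continuous_attains_sup[OF compact_Icc _ wc0] dpos by auto
  define W where "W = w xW"
  have Wnn: "0 \<le> W" unfolding W_def using wnn xW(1) by auto
  have Bfnn: "0 \<le> Bf" using fhle[of 0] fhpos[of 0] by simp
  define K where "K = W * \<delta> * Bf"
  have Knn: "0 \<le> K" unfolding K_def using Wnn Bfnn dpos by simp
  define E where "E = 1 / (K + 1)"
  have Epos: "0 < E" unfolding E_def using Knn by simp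
  have KE: "K * E \<le> 1" unfolding E_def using Knn by (simp add: field_simps)
  have TT: "tonelli \<delta> a E L W Bf K w fh yb"
  proof (unfold_locales)
    show "0 < \<delta>" by (rule dpos)
    show "0 < a" by (rule apos)
    show "0 < E" by (rule Epos)
    show "continuous_on {0..\<delta>} w" by (rule wc0)
    show "\<And>r. r \<in> {0..\<delta>} \<Longrightarrow> 0 \<le> w r" using wnn by auto
    show "\<And>r. r \<in> {0..\<delta>} \<Longrightarrow> w r \<le> W" unfolding W_def by (rule xW(2))
    show "continuous_on UNIV fh" by (rule fhcont)
    show "\<And>x. 0 \<le> fh x" using fhpos less_imp_le by blast
    show "\<And>x. fh x \<le> Bf" by (rule fhle)
    show "K = W * \<delta> * Bf" by (rule K_def)
    show "K * E \<le> 1" by (rule KE)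
    show "\<And>e. 0 < e \<Longrightarrow> \<exists>d>0. \<forall>x x'. \<bar>x - x'\<bar> < d \<longrightarrow> \<bar>fh x - fh x'\<bar> < e" by (rule fhuc)
    show "continuous_on {-\<delta>..a} yb" by (rule ybcont)
    show "yb a = L" by (rule yba)
  qed
  obtain g where g: "continuous_on {a..a+E} g" "g a = L" "\<forall>t\<in>{a..a+E}. L \<le> g t \<and> g t \<le> L + 1"
    "\<forall>t\<in>{a..a+E}. g t = L + integral {a..t}
        (\<lambda>\<tau>. integral {0..\<delta>} (\<lambda>r. w r * fh (if \<tau> - r \<le> a then yb (\<tau> - r) else g (\<tau> - r))))"
    "continuous_on {-\<delta>..a+E} (\<lambda>s. if s \<le> a then yb s else g s)"
    "\<And>p q. continuous_on {p..q}
        (\<lambda>\<tau>. integral {0..\<delta>} (\<lambda>r. w r * fh (if \<tau> - r \<le> a then yb (\<tau> - r) else g (\<tau> - r))))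
       \<or> \<not> continuous_on {p-\<delta>..q} (\<lambda>s. if s \<le> a then yb s else g s)"
    by (rule tonelli.limit_solution'[OF TT]) blast
  define Z where "Z s = (if s \<le> a then yb s else g s)" for s
  have Zeq: "(\<lambda>s. if s \<le> a then yb s else g s) = Z" by (rule ext) (simp add: Z_def)
  define P where "P \<tau> = integral {0..\<delta>} (\<lambda>r. w r * fh (Z (\<tau> - r)))" for \<tau>
  have Peq: "(\<lambda>\<tau>. integral {0..\<delta>} (\<lambda>r. w r * fh (if \<tau> - r \<le> a then yb (\<tau> - r) else g (\<tau> - r)))) = P"
    by (rule ext) (simp add: P_def Z_def)
  have Zc: "continuous_on {-\<delta>..a+E} Z" using g(5) unfolding Zeq .
  have Pc: "continuous_on {0..a+E} P" using g(6)[of 0 "a+E"] Zc unfolding Zeq Peq by simp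
  have gid: "\<And>t. t \<in> {a..a+E} \<Longrightarrow> g t = L + integral {a..t} P" using g(4) unfolding Peq by blast
  have Z_range: "m \<le> Z s \<and> Z s \<le> U" if s: "s \<in> {-\<delta>..a+E}" for s
  proof (cases "s \<le> a")
    case True then show ?thesis using yb_range[of s] s unfolding Z_def by auto
  next
    case False
    then have "s \<in> {a..a+E}" using s by auto
    then have "L \<le> g s" "g s \<le> L + 1" using g(3) by auto
    then show ?thesis using False my0 y0L unfolding Z_def U_def by auto
  qed
  have RP: "integral {\<tau>-\<delta>..\<tau>} (\<lambda>s. w (\<tau> - s) * f (Z s)) = P \<tau>" if \<tau>: "\<tau> \<in> {0..a+E}" for \<tau>
  proof -
    have "integral {\<tau>-\<delta>..\<tau>} (\<lambda>s. w (\<tau> - s) * f (Z s))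
        = integral {\<tau>-\<delta>..\<tau>} (\<lambda>s. (\<lambda>r. w r * f (Z (\<tau> - r))) (\<tau> - s))" by simp
    also have "\<dots> = integral {0..\<delta>} (\<lambda>r. w r * f (Z (\<tau> - r)))" by (rule integral_cv)
    also have "\<dots> = P \<tau>" unfolding P_def
    proof (rule Henstock_Kurzweil_Integration.integral_cong)
      fix r assume r: "r \<in> {0..\<delta>}"
      then have "\<tau> - r \<in> {-\<delta>..a+E}" using \<tau> by auto
      then show "w r * f (Z (\<tau> - r)) = w r * fh (Z (\<tau> - r))" using Z_range fh_eq by auto
    qed
    finally show ?thesis .
  qed
  have Zy: "Z t = y t" if "t < a" for t using that unfolding Z_def yb_def by auto
  have Pi: "P integrable_on {p..q}" if "0 \<le> p" "q \<le> a + E" for p q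
    by (rule integrable_continuous_interval, rule continuous_on_subset[OF Pc]) (use that in auto)
  have early: "y t = y 0 + integral {0..t} P" if t: "0 \<le> t" "t < a" for t
  proof -
    define Ry where "Ry x = integral {x-\<delta>..x} (\<lambda>s. w (x - s) * f (y s))" for x
    have "(Ry has_integral y t - y 0) {0..t}"
    proof (rule fundamental_theorem_of_calculus[OF t(1)])
      fix x assume x: "x \<in> {0..t}"
      have xT: "ereal x < T" using x t Ta by auto
      have "(y has_real_derivative Ry x) (at x within {t. 0 \<le> t \<and> ereal t < T})"
        unfolding Ry_def by (rule yderiv) (use x xT in auto)
      then have "(y has_real_derivative Ry x) (at x within {0..t})"
        by (rule DERIV_subset) (use t Ta in auto)
      then show "(y has_vector_derivative Ry x) (at x within {0..t})"
        by (simp add: has_real_derivative_iff_has_vector_derivative)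
    qed
    moreover have "Ry x = P x" if x: "x \<in> {0..t}" for x
    proof -
      have "Ry x = integral {x-\<delta>..x} (\<lambda>s. w (x - s) * f (Z s))" unfolding Ry_def
        by (rule Henstock_Kurzweil_Integration.integral_cong) (use x t Zy in auto)
      also have "\<dots> = P x" by (rule RP) (use x t Epos in auto)
      finally show ?thesis .
    qed
    ultimately have "(P has_integral y t - y 0) {0..t}" using has_integral_cong[of "{0..t}" Ry P] by blast
    then show ?thesis by (simp add: integral_unique)
  qed
  have ata: "L = y 0 + integral {0..a} P"
  proof -
    define q where "q t = y 0 + integral {0..t} P" for t
    have qc: "continuous_on {0..a} q" unfolding q_def
      by (intro continuous_intros indefinite_integral_continuous_1 Pi) (use Epos in auto)
    have "(q \<longlongrightarrow> q a) (at a within {0..a})" using qc apos unfolding continuous_on_def by auto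
    moreover have "at a within {0..a} = at_left a" by (rule at_within_Icc_at_left) (use apos in auto)
    ultimately have l1: "(q \<longlongrightarrow> q a) (at_left a)" by simp
    have ev: "eventually (\<lambda>t. y t = q t) (at_left a)"
      using eventually_at_left_real[OF apos]
    proof (rule eventually_mono)
      fix x assume x: "x \<in> {0<..<a}"
      have e1: "y x = y 0 + integral {0..x} P" by (rule early) (use x in auto)
      show "y x = q x" unfolding q_def by (rule e1)
    qed
    have l2: "(q \<longlongrightarrow> L) (at_left a)" using ylim tendsto_cong[OF ev] by simp
    have "q a = L" by (rule tendsto_unique[OF trivial_limit_at_left_real l1 l2])
    then show ?thesis unfolding q_def by simp
  qed
  have allid: "Z t = y 0 + integral {0..t} P" if t: "t \<in> {0..a+E}" for t
  proof (cases "t < a")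
    case True
    have e1: "y t = y 0 + integral {0..t} P" by (rule early) (use True t in auto)
    have "Z t = y t" by (rule Zy[OF True])
    then show ?thesis using e1 by simp
  next
    case False
    show ?thesis
    proof (cases "t = a")
      case True then show ?thesis using ata unfolding Z_def yb_def by simp
    next
      case False
      then have ta: "a < t" using \<open>\<not> t < a\<close> by simp
      have comb: "integral {0..a} P + integral {a..t} P = integral {0..t} P"
        by (rule Henstock_Kurzweil_Integration.integral_combine[OF _ _ Pi]) (use ta t apos in auto)
      have "Z t = g t" unfolding Z_def using ta by simp
      also have "\<dots> = L + integral {a..t} P" by (rule gid) (use ta t in auto)
      finally show ?thesis using ata comb by simp
    qed
  qed
  define S' where "S' = {t. 0 \<le> t \<and> ereal t < ereal (a + E)}"
  have S'eq: "S' = {0..<a+E}" unfolding S'_def by auto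
  have deriv: "(Z has_real_derivative integral {t-\<delta>..t} (\<lambda>s. w (t - s) * f (Z s))) (at t within S')"
    if t: "t \<in> S'" for t
  proof -
    have tI: "t \<in> {0..a+E}" using t S'eq by auto
    have d1: "((\<lambda>x. integral {0..x} P) has_real_derivative P t) (at t within {0..a+E})"
      by (rule integral_has_real_derivative[OF Pc tI])
    have d2: "((\<lambda>x. y 0 + integral {0..x} P) has_real_derivative P t) (at t within {0..a+E})"
      using DERIV_add[OF DERIV_const d1] by simp
    have d3: "((\<lambda>x. y 0 + integral {0..x} P) has_real_derivative P t) (at t within S')"
      by (rule DERIV_subset[OF d2]) (auto simp: S'eq)
    have d4: "(Z has_real_derivative P t) (at t within S')"
    proof (rule has_field_derivative_transform_within[OF d3 zero_less_one t])
      fix x assume "x \<in> S'"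
      then show "y 0 + integral {0..x} P = Z x" using allid[of x] S'eq by auto
    qed
    then show ?thesis using RP[OF tI] by simp
  qed
  have sol': "is_solution \<delta> w f \<psi> (ereal (a + E)) Z"
    unfolding is_solution_def
  proof (intro conjI allI impI ballI)
    show "0 < ereal (a + E)" using apos Epos by simp
    show "continuous_on {t. - \<delta> \<le> t \<and> ereal t < ereal (a + E)} Z"
      by (rule continuous_on_subset[OF Zc]) auto
    fix t
    show "t \<in> {- \<delta>..0} \<Longrightarrow> Z t = \<psi> t" using Zy[of t] ypsi[of t] apos by auto
    show "- \<delta> \<le> t \<and> ereal t < ereal (a + E) \<Longrightarrow> 0 < Z t"
      using Z_range[of t] mpos by auto
    show "0 \<le> t \<and> ereal t < ereal (a + E) \<Longrightarrow>
      (Z has_real_derivative integral {t - \<delta>..t} (\<lambda>s. w (t - s) * f (Z s)))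
        (at t within {t. 0 \<le> t \<and> ereal t < ereal (a + E)})"
      using deriv[of t] unfolding S'_def by auto
  qed
  show ?thesis
  proof (intro exI conjI)
    show "T < ereal (a + E)" using Ta Epos by simp
    show "is_solution \<delta> w f \<psi> (ereal (a + E)) Z" by (rule sol')
    show "\<forall>t. - \<delta> \<le> t \<and> ereal t < T \<longrightarrow> Z t = y t" using Zy Ta by auto
  qed
qed

end

theorem lemma6p3:
  fixes \<delta> :: real and f w \<psi> y :: "real \<Rightarrow> real" and T :: ereal
  assumes "\<delta> > 0"
    and "continuous_on {0<..} f" and "\<forall>x>0. f x > 0"
    and "asymp_increasing f"
    and "filterlim (\<lambda>x. f x / x) at_top at_top"
    and "continuous_on {0..} w" and "\<forall>x\<ge>0. w x \<ge> 0" and "w 0 > 0"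
    and "continuous_on {-\<delta>..0} \<psi>" and "\<forall>t\<in>{-\<delta>..0}. \<psi> t > 0"
    and "\<exists>\<eta>>0. (\<forall>u\<ge>\<eta>. f integrable_on {0..u}) \<and>
              (\<lambda>u. 1 / sqrt (integral {0..u} f)) integrable_on {\<eta>..}"
    and "is_maximal_solution \<delta> w f \<psi> T y"
  shows "\<exists>T0::real. T = ereal T0 \<and> filterlim (\<lambda>t. \<bar>y t\<bar>) at_top (at_left T0)"
proof -
  from assms(12) have sol: "is_solution \<delta> w f \<psi> T y"
    and nomax: "\<not> (\<exists>T' z. T < T' \<and> is_solution \<delta> w f \<psi> T' z \<and>
              (\<forall>t. -\<delta> \<le> t \<and> ereal t < T \<longrightarrow> z t = y t))"
    unfolding is_maximal_solution_def by auto
  interpret sol_ctx \<delta> w f \<psi> y T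
  proof (unfold_locales)
    show "0 < \<delta>" by (rule assms(1))
    show "continuous_on {0<..} f" by (rule assms(2))
    show "\<And>x. 0 < x \<Longrightarrow> 0 < f x" using assms(3) by auto
    show "continuous_on {0..} w" by (rule assms(6))
    show "\<And>x. 0 \<le> x \<Longrightarrow> 0 \<le> w x" using assms(7) by auto
    show "is_solution \<delta> w f \<psi> T y" by (rule sol)
  qed
  obtain \<eta> where eta: "\<eta> > 0" "\<forall>u\<ge>\<eta>. f integrable_on {0..u}"
      "(\<lambda>u. 1 / sqrt (integral {0..u} f)) integrable_on {\<eta>..}"
    using assms(11) by blast
  show ?thesis
  proof (cases T)
    case (real a)
    have unb: "\<exists>t. 0 \<le> t \<and> t < a \<and> B < y t" for B
    proof (rule ccontr)
      assume "\<not> (\<exists>t. 0 \<le> t \<and> t < a \<and> B < y t)"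
      then have "\<forall>t. 0 \<le> t \<and> t < a \<longrightarrow> y t \<le> B" by (auto simp: not_less)
      then show False using partB[OF real] nomax by blast
    qed
    have "filterlim (\<lambda>t. \<bar>y t\<bar>) at_top (at_left a)"
      unfolding filterlim_at_top
    proof
      fix Z :: real
      obtain t0 where t0: "0 \<le> t0" "t0 < a" "Z < y t0" using unb by blast
      show "eventually (\<lambda>t. Z \<le> \<bar>y t\<bar>) (at_left a)"
        using eventually_at_left_real[OF t0(2)]
      proof (rule eventually_mono)
        fix x assume x: "x \<in> {t0<..<a}"
        have "y t0 \<le> y x" by (rule y_mono) (use x t0 real in auto)
        then show "Z \<le> \<bar>y x\<bar>" using t0 by simp
      qed
    qed
    then show ?thesis using real by blast
  next
    case PInf
    then have TP: "T = PInfty" by simp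
    show ?thesis using partA[OF TP assms(8) assms(4) assms(5) eta] by blast
  next
    case MInf
    then show ?thesis using Tpos by simp
  qed
qed

end
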